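(* Let $t_1<t_2$, let $u:[t_1,t_2]\to\mathcal C$ be measurable and $p:[t_1,t_2]\to\mathbb R^3$ absolutely continuous with $\frac{dp}{dt}=p(t)\times u(t)$ and $\mathcal H(p(t),u(t))=\mathcal M(p(t))=0$ for almost all $t$. (a) If $p(t)=S-\kappa Q+z(t)Z$ for all $t\in[t_1,t_2]$, then $z(t)=0$ on $[t_1,t_2]$ and $u(t)=W_+/(1+\kappa c+\kappa+c)$ for almost all $t$. (b) If $\kappa>0$ and $p(t)=S+\kappa Q+z(t)Z$ for all $t\in[t_1,t_2]$, then $\kappa\ge c$, $z(t)=0$ on $[t_1,t_2]$ and $u(t)$ is the positive multiple of $W_-$ lying in $\mathcal C$ for almost all $t$. Analogously, if $p(t)=-S+\kappa Q+z(t)Z$ (resp. $p(t)=-S-\kappa Q+z(t)Z$ with $\kappa>0$) on $[t_1,t_2]$, then $z\equiv0$ and $u(t)$ is the multiple of $-W_+$ (resp. $-W_-$) lying in $\mathcal C$.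
   Context: Fix unit vectors $X,Y\in\mathbb R^3$ with angle $\alpha\in(0,\pi/2]$, $c=\cos\alpha$, and $\kappa\in[0,1]$. Let $Z=X\times Y$, $S=X-cY$, $Q=Y-cX$. Let $\mathcal C=\{aX+bY:|a|+|b|=1\}$, $\mathrm{cost}(aX+bY)=|a|+\kappa|b|$, $\mathcal H(p,u)=-\sin^2(\alpha)\mathrm{cost}(u)+(p,u)$, $\mathcal M(p)=\max_{u\in\mathcal C}\mathcal H(p,u)$. $W_+=(1+\kappa c)X-(\kappa+c)Y$ and $W_-=(1-\kappa c)X+(\kappa-c)Y$. *)

theory Defs
  imports "HOL-Analysis.Analysis" "HOL-Analysis.Cross3"
begin

definition absolutely_continuous_on :: "real set \<Rightarrow> (real \<Rightarrow> 'a::real_normed_vector) \<Rightarrow> bool" where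
  "absolutely_continuous_on S f \<longleftrightarrow>
     (\<forall>e>0. \<exists>d>0. \<forall>D::(real \<times> real) set.
        finite D \<and> (\<forall>(a,b)\<in>D. a \<le> b \<and> {a..b} \<subseteq> S) \<and>
        pairwise (\<lambda>(a,b) (a',b'). {a<..<b} \<inter> {a'<..<b'} = {}) D \<and>
        (\<Sum>(a,b)\<in>D. b - a) < d
        \<longrightarrow> (\<Sum>(a,b)\<in>D. norm (f b - f a)) < e)"

definition ctrlset :: "real^3 \<Rightarrow> real^3 \<Rightarrow> (real^3) set" where
  "ctrlset X Y = {a *\<^sub>R X + b *\<^sub>R Y | a b. \<bar>a\<bar> + \<bar>b\<bar> = 1}"

text \<open>cost(aX+bY) = |a| + kappa |b| (well defined since X, Y are independent).\<close>
definition cost :: "real^3 \<Rightarrow> real^3 \<Rightarrow> real \<Rightarrow> real^3 \<Rightarrow> real" where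
  "cost X Y \<kappa> v = (THE r. \<exists>a b. v = a *\<^sub>R X + b *\<^sub>R Y \<and> r = \<bar>a\<bar> + \<kappa> * \<bar>b\<bar>)"

definition Ham :: "real^3 \<Rightarrow> real^3 \<Rightarrow> real \<Rightarrow> real \<Rightarrow> real^3 \<Rightarrow> real^3 \<Rightarrow> real" where
  "Ham X Y \<alpha> \<kappa> p v = - (sin \<alpha>)\<^sup>2 * cost X Y \<kappa> v + p \<bullet> v"

text \<open>M(p) = max over C of H(p,.) (C is compact, so the supremum is a maximum).\<close>
definition Mfun :: "real^3 \<Rightarrow> real^3 \<Rightarrow> real \<Rightarrow> real \<Rightarrow> real^3 \<Rightarrow> real" where
  "Mfun X Y \<alpha> \<kappa> p = Sup (Ham X Y \<alpha> \<kappa> p ` ctrlset X Y)"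

end

theory Submission
  imports Defs
begin


lemma triple: "cross3 p u \<bullet> w = p \<bullet> (cross3 u w)" for p u w :: "real^3"
  by (simp add: cross3_simps)

lemma vtriple: "cross3 x (cross3 y z) = (x \<bullet> z) *\<^sub>R y - (x \<bullet> y) *\<^sub>R z" for x y z :: "real^3"
  by (simp add: cross3_simps forall_3)

lemma alg:
  fixes X Y p :: "real^3" and a b c :: real
  assumes X: "norm X = 1" and Y: "norm Y = 1" and XY: "X \<bullet> Y = c"
  shows "(cross3 p (a *\<^sub>R X + b *\<^sub>R Y)) \<bullet> X = - b * (p \<bullet> (cross3 X Y))"
    and "(cross3 p (a *\<^sub>R X + b *\<^sub>R Y)) \<bullet> Y = a * (p \<bullet> (cross3 X Y))"
    and "(cross3 p (a *\<^sub>R X + b *\<^sub>R Y)) \<bullet> (cross3 X Y) = p \<bullet> ((b + a*c) *\<^sub>R X - (a + b*c) *\<^sub>R Y)"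
    and "(cross3 X Y) \<bullet> X = 0" "(cross3 X Y) \<bullet> Y = 0"
    and "(cross3 X Y) \<bullet> (cross3 X Y) = 1 - c^2"
proof -
  have XX: "X \<bullet> X = 1" using X by (simp add: norm_eq_sqrt_inner)
  have YY: "Y \<bullet> Y = 1" using Y by (simp add: norm_eq_sqrt_inner)
  show "(cross3 p (a *\<^sub>R X + b *\<^sub>R Y)) \<bullet> X = - b * (p \<bullet> (cross3 X Y))"
    unfolding triple by (simp add: cross_add_left cross_mult_left cross_skew[of Y X] inner_add_right)
  show "(cross3 p (a *\<^sub>R X + b *\<^sub>R Y)) \<bullet> Y = a * (p \<bullet> (cross3 X Y))"
    unfolding triple by (simp add: cross_add_left cross_mult_left inner_add_right)
  show "(cross3 p (a *\<^sub>R X + b *\<^sub>R Y)) \<bullet> (cross3 X Y) = p \<bullet> ((b + a*c) *\<^sub>R X - (a + b*c) *\<^sub>R Y)"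
    unfolding triple by (simp add: cross_add_left cross_mult_left vtriple XX YY XY inner_commute[of Y X]
       inner_add_right inner_diff_right algebra_simps)
  show "(cross3 X Y) \<bullet> X = 0" "(cross3 X Y) \<bullet> Y = 0" by (simp_all add: dot_cross_self)
  show "(cross3 X Y) \<bullet> (cross3 X Y) = 1 - c^2"
    using norm_cross_dot[of X Y] X Y XY by (simp add: power2_norm_eq_inner)
qed




lemma AE_dense:
  fixes l r :: real
  assumes "AE t in lebesgue. P t" "l < r"
  shows "\<exists>t\<in>{l<..<r}. P t"
proof (rule ccontr)
  assume nt: "\<not> (\<exists>t\<in>{l<..<r}. P t)"
  from assms(1) obtain N where N: "{t. \<not> P t} \<subseteq> N" "N \<in> null_sets lebesgue"
    using assms(1) unfolding eventually_ae_filter by auto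
  have "{l<..<r} \<subseteq> N" using nt N by auto
  hence "{l<..<r} \<in> null_sets lebesgue" using null_sets_subset[OF N(2), of "{l<..<r}"] by simp
  hence "negligible {l<..<r}" using negligible_iff_null_sets by blast
  moreover have "\<not> negligible {l<..<r}"
    using assms(2) by (metis open_not_negligible open_greaterThanLessThan greaterThanLessThan_empty_iff not_less)
  ultimately show False by blast
qed




lemma indep:
  fixes X Y :: "real^3"
  assumes X: "norm X = 1" and Y: "norm Y = 1" and XY: "X \<bullet> Y = c" and c: "c^2 < 1"
    and eq: "a *\<^sub>R X + b *\<^sub>R Y = a' *\<^sub>R X + b' *\<^sub>R Y"
  shows "a = a' \<and> b = b'"
proof -
  have XX: "X \<bullet> X = 1" using X by (simp add: norm_eq_sqrt_inner)
  have YY: "Y \<bullet> Y = 1" using Y by (simp add: norm_eq_sqrt_inner)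
  have e1: "a + b * c = a' + b' * c"
    using arg_cong[OF eq, of "\<lambda>v. v \<bullet> X"] XX XY by (simp add: inner_add_left inner_commute[of Y X])
  have e2: "a * c + b = a' * c + b'"
    using arg_cong[OF eq, of "\<lambda>v. v \<bullet> Y"] YY XY by (simp add: inner_add_left)
  have f1: "a - a' = (b' - b) * c" using e1 by (simp add: algebra_simps)
  have f2: "b' - b = (a - a') * c" using e2 by (simp add: algebra_simps)
  have "a - a' = (a - a') * c^2" using f1 f2 by (simp add: power2_eq_square)
  hence "(a - a') * (1 - c^2) = 0" by (simp add: algebra_simps)
  hence "a = a'" using c by simp
  with f2 show ?thesis by simp
qed

lemma cost_eq:
  fixes X Y :: "real^3"
  assumes X: "norm X = 1" and Y: "norm Y = 1" and XY: "X \<bullet> Y = c" and c: "c^2 < 1"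
  shows "cost X Y \<kappa> (a *\<^sub>R X + b *\<^sub>R Y) = \<bar>a\<bar> + \<kappa> * \<bar>b\<bar>"
  unfolding cost_def
proof (rule the_equality)
  show "\<exists>a' b'. a *\<^sub>R X + b *\<^sub>R Y = a' *\<^sub>R X + b' *\<^sub>R Y \<and> \<bar>a\<bar> + \<kappa> * \<bar>b\<bar> = \<bar>a'\<bar> + \<kappa> * \<bar>b'\<bar>"
    by blast
  fix r assume "\<exists>a' b'. a *\<^sub>R X + b *\<^sub>R Y = a' *\<^sub>R X + b' *\<^sub>R Y \<and> r = \<bar>a'\<bar> + \<kappa> * \<bar>b'\<bar>"
  then obtain a' b' where "a *\<^sub>R X + b *\<^sub>R Y = a' *\<^sub>R X + b' *\<^sub>R Y" "r = \<bar>a'\<bar> + \<kappa> * \<bar>b'\<bar>" by blast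
  with indep[OF X Y XY c] show "r = \<bar>a\<bar> + \<kappa> * \<bar>b\<bar>" by auto
qed

lemma deriv_const_inner:
  fixes p :: "real \<Rightarrow> real^3"
  assumes "t1 < t2" "t \<in> {t1..t2}" "(p has_vector_derivative v) (at t within {t1..t2})"
    and "\<forall>s\<in>{t1..t2}. p s \<bullet> w = K"
  shows "v \<bullet> w = 0"
proof -
  have "((\<lambda>s. p s \<bullet> w) has_vector_derivative (v \<bullet> w)) (at t within {t1..t2})"
    using has_derivative_inner_left[OF assms(3)[unfolded has_vector_derivative_def], of w]
    by (simp add: has_vector_derivative_def)
  hence d1: "((\<lambda>s. K) has_vector_derivative (v \<bullet> w)) (at t within {t1..t2})"
    using has_vector_derivative_transform[OF assms(2), of "\<lambda>s. K" "\<lambda>s. p s \<bullet> w"] assms(4) by auto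
  have d2: "((\<lambda>s. K) has_vector_derivative 0) (at t within {t1..t2})" by simp
  show ?thesis using vector_derivative_unique_within_closed_interval[of t1 t2 t, unfolded cbox_interval, OF assms(1) _ d1 d2] assms(2) by simp
qed

lemma deriv_const:
  fixes p :: "real \<Rightarrow> real^3"
  assumes "t1 < t2" "t \<in> {t1..t2}" "(p has_vector_derivative v) (at t within {t1..t2})"
    and "\<forall>s\<in>{t1..t2}. p s = K"
  shows "v = 0"
proof -
  have d1: "((\<lambda>s. K) has_vector_derivative v) (at t within {t1..t2})"
    using has_vector_derivative_transform[OF assms(2), of "\<lambda>s. K" p] assms(3,4) by auto
  have d2: "((\<lambda>s. K) has_vector_derivative 0) (at t within {t1..t2})" by simp
  show ?thesis using vector_derivative_unique_within_closed_interval[of t1 t2 t, unfolded cbox_interval, OF assms(1) _ d1 d2] assms(2) by simp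
qed

lemma ac_cont:
  fixes f :: "real \<Rightarrow> 'a::real_normed_vector"
  assumes "absolutely_continuous_on {t1..t2} f"
  shows "continuous_on {t1..t2} f"
  unfolding continuous_on_iff
proof (intro ballI allI impI)
  fix x e assume x: "x \<in> {t1..t2}" and e: "(0::real) < e"
  obtain d where d: "d > 0" and H: "\<And>D::(real\<times>real) set. finite D \<and> (\<forall>(a,b)\<in>D. a \<le> b \<and> {a..b} \<subseteq> {t1..t2}) \<and>
        pairwise (\<lambda>(a,b) (a',b'). {a<..<b} \<inter> {a'<..<b'} = {}) D \<and>
        (\<Sum>(a,b)\<in>D. b - a) < d
        \<Longrightarrow> (\<Sum>(a,b)\<in>D. norm (f b - f a)) < e"
    using assms e unfolding absolutely_continuous_on_def by meson
  show "\<exists>d>0. \<forall>x'\<in>{t1..t2}. dist x' x < d \<longrightarrow> dist (f x') (f x) < e"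
  proof (intro exI[of _ d] conjI ballI impI d)
    fix y assume y: "y \<in> {t1..t2}" and dy: "dist y x < d"
    show "dist (f y) (f x) < e"
    proof (cases "x \<le> y")
      case True
      have "{x..y} \<subseteq> {t1..t2}" using x y by auto
      with H[of "{(x,y)}"] True dy show ?thesis by (auto simp: dist_norm dist_real_def)
    next
      case False
      have "{y..x} \<subseteq> {t1..t2}" using x y by auto
      with H[of "{(y,x)}"] False dy show ?thesis by (auto simp: dist_norm dist_real_def norm_minus_commute)
    qed
  qed
qed




lemma core:
  fixes X Y :: "real^3" and \<alpha> \<kappa> t1 t2 \<sigma> \<tau> :: real
    and u p :: "real \<Rightarrow> real^3" and z :: "real \<Rightarrow> real"
  assumes X: "norm X = 1" and Y: "norm Y = 1"
    and angle: "X \<bullet> Y = cos \<alpha>" and alpha: "0 < \<alpha>" "\<alpha> \<le> pi / 2"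
    and t12: "t1 < t2"
    and u_C: "\<forall>t\<in>{t1..t2}. u t \<in> ctrlset X Y"
    and p_ac: "absolutely_continuous_on {t1..t2} p"
    and p_ode: "AE t in lebesgue. t \<in> {t1..t2} \<longrightarrow>
                  (p has_vector_derivative (cross3 (p t) (u t))) (at t within {t1..t2})"
    and pmp: "AE t in lebesgue. t \<in> {t1..t2} \<longrightarrow>
                  Ham X Y \<alpha> \<kappa> (p t) (u t) = Mfun X Y \<alpha> \<kappa> (p t) \<and> Mfun X Y \<alpha> \<kappa> (p t) = 0"
    and sig: "\<sigma> = 1 \<or> \<sigma> = -1"
    and pz: "\<forall>t\<in>{t1..t2}. p t = \<sigma> *\<^sub>R (X - cos \<alpha> *\<^sub>R Y) + \<tau> *\<^sub>R (Y - cos \<alpha> *\<^sub>R X) + z t *\<^sub>R cross3 X Y"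
  shows "(\<forall>t\<in>{t1..t2}. z t = 0) \<and>
    (AE t in lebesgue. t \<in> {t1..t2} \<longrightarrow> (\<exists>a b. u t = a *\<^sub>R X + b *\<^sub>R Y \<and> \<bar>a\<bar> + \<bar>b\<bar> = 1 \<and>
        \<sigma>*a + \<tau>*b = \<bar>a\<bar> + \<kappa>*\<bar>b\<bar> \<and> \<sigma>*(b + a*cos \<alpha>) = \<tau>*(a + b*cos \<alpha>)))"
proof -
  define c where "c = cos \<alpha>"
  define Z where "Z = cross3 X Y"
  define I where "I = {t1..t2}"
  have c0: "0 \<le> c" unfolding c_def using alpha by (intro cos_ge_zero) auto
  have c1: "c < 1" unfolding c_def using alpha cos_monotone_0_pi[of 0 \<alpha>] by auto
  have cc: "c^2 < 1" using c0 c1 mult_left_mono[of c 1 c] by (simp add: power2_eq_square)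
  have ZZpos: "0 < 1 - c^2" using cc by simp
  have XY: "X \<bullet> Y = c" using angle c_def by simp
  have XX: "X \<bullet> X = 1" using X by (simp add: norm_eq_sqrt_inner)
  have YY: "Y \<bullet> Y = 1" using Y by (simp add: norm_eq_sqrt_inner)
  note A = alg[OF X Y XY]
  have ZX: "Z \<bullet> X = 0" and ZY: "Z \<bullet> Y = 0" and ZZ: "Z \<bullet> Z = 1 - c^2" using A(4-6) Z_def by auto
  define P0 where "P0 = \<sigma> *\<^sub>R (X - c *\<^sub>R Y) + \<tau> *\<^sub>R (Y - c *\<^sub>R X)"
  have pz': "\<forall>t\<in>I. p t = P0 + z t *\<^sub>R Z" using pz unfolding P0_def c_def Z_def I_def by simp
  have P0X: "P0 \<bullet> X = \<sigma> * (1 - c^2)" and P0Y: "P0 \<bullet> Y = \<tau> * (1 - c^2)" and P0Z: "P0 \<bullet> Z = 0"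
    unfolding P0_def using XX YY XY ZX ZY
    by (auto simp: inner_add_left inner_diff_left inner_commute[of Y X] inner_commute[of Z] algebra_simps power2_eq_square)
  have pZ: "\<forall>t\<in>I. p t \<bullet> Z = z t * (1 - c^2)" using pz' P0Z ZZ by (simp add: inner_add_left)
  have pX: "\<forall>t\<in>I. p t \<bullet> X = \<sigma> * (1 - c^2)" using pz' P0X ZX by (simp add: inner_add_left)
  have pY: "\<forall>t\<in>I. p t \<bullet> Y = \<tau> * (1 - c^2)" using pz' P0Y ZY by (simp add: inner_add_left)
  define G where "G t \<longleftrightarrow> (p has_vector_derivative (cross3 (p t) (u t))) (at t within I) \<and>
                  Ham X Y \<alpha> \<kappa> (p t) (u t) = 0" for t
  have AEG: "AE t in lebesgue. t \<in> I \<longrightarrow> G t"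
    using p_ode pmp unfolding G_def I_def by eventually_elim auto
  have step3: "z t = 0" if t: "t \<in> I" "G t" for t
  proof -
    have "u t \<in> ctrlset X Y" using u_C t unfolding I_def by auto
    then obtain a b where ab: "u t = a *\<^sub>R X + b *\<^sub>R Y" "\<bar>a\<bar> + \<bar>b\<bar> = 1"
      unfolding ctrlset_def by blast
    have d: "(p has_vector_derivative (cross3 (p t) (u t))) (at t within {t1..t2})" using t G_def I_def by auto
    have "cross3 (p t) (u t) \<bullet> X = 0"
      by (rule deriv_const_inner[OF t12 _ d, of _ "\<sigma> * (1 - c^2)"]) (use t pX I_def in auto)
    hence "b * z t = 0" using A(1)[of "p t" a b] ab pZ t Z_def ZZpos by auto
    moreover have "cross3 (p t) (u t) \<bullet> Y = 0"
      by (rule deriv_const_inner[OF t12 _ d, of _ "\<tau> * (1 - c^2)"]) (use t pY I_def in auto)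
    hence "a * z t = 0" using A(2)[of "p t" a b] ab pZ t Z_def ZZpos by auto
    ultimately show ?thesis using ab(2) by auto
  qed
  have cont: "continuous_on I (\<lambda>t. p t \<bullet> Z)"
    using ac_cont[OF p_ac] unfolding I_def by (intro continuous_intros)
  have zall: "\<forall>t\<in>I. z t = 0"
  proof (rule ccontr)
    assume "\<not> (\<forall>t\<in>I. z t = 0)"
    then obtain t0 where t0: "t0 \<in> I" "z t0 \<noteq> 0" by auto
    hence g0: "p t0 \<bullet> Z \<noteq> 0" using pZ ZZpos by auto
    then obtain d where d: "d > 0" "\<forall>s\<in>I. dist s t0 < d \<longrightarrow> dist (p s \<bullet> Z) (p t0 \<bullet> Z) < \<bar>p t0 \<bullet> Z\<bar>"
      using cont t0(1) unfolding continuous_on_iff by (meson zero_less_abs_iff)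
    define l where "l = max t1 (t0 - d)"
    define r where "r = min t2 (t0 + d)"
    have "l < r" using t0 t12 d unfolding l_def r_def I_def by auto
    from AE_dense[OF AEG this] obtain t where t: "t \<in> {l<..<r}" "t \<in> I \<longrightarrow> G t" by auto
    have tI: "t \<in> I" using t(1) unfolding l_def r_def I_def by auto
    have "dist t t0 < d" using t(1) unfolding l_def r_def dist_real_def by auto
    hence "p t \<bullet> Z \<noteq> 0" using d tI by (auto simp: dist_real_def)
    moreover have "z t = 0" using step3 tI t(2) by auto
    ultimately show False using pZ tI by auto
  qed
  have step5: "\<exists>a b. u t = a *\<^sub>R X + b *\<^sub>R Y \<and> \<bar>a\<bar> + \<bar>b\<bar> = 1 \<and>
        \<sigma>*a + \<tau>*b = \<bar>a\<bar> + \<kappa>*\<bar>b\<bar> \<and> \<sigma>*(b + a*cos \<alpha>) = \<tau>*(a + b*cos \<alpha>)" if t: "t \<in> I" "G t" for t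
  proof -
    have "u t \<in> ctrlset X Y" using u_C t unfolding I_def by auto
    then obtain a b where ab: "u t = a *\<^sub>R X + b *\<^sub>R Y" "\<bar>a\<bar> + \<bar>b\<bar> = 1"
      unfolding ctrlset_def by blast
    have pc: "\<forall>s\<in>{t1..t2}. p s = P0" using pz' zall I_def by auto
    have d: "(p has_vector_derivative (cross3 (p t) (u t))) (at t within {t1..t2})" using t G_def I_def by auto
    have v0: "cross3 (p t) (u t) = 0" by (rule deriv_const[OF t12 _ d pc]) (use t I_def in auto)
    have ptP: "p t = P0" using pc t I_def by auto
    have "0 = P0 \<bullet> ((b + a*c) *\<^sub>R X - (a + b*c) *\<^sub>R Y)"
      using A(3)[of "p t" a b] v0 ab ptP by simp
    moreover have "P0 \<bullet> ((b + a*c) *\<^sub>R X - (a + b*c) *\<^sub>R Y) = (1 - c^2) * (\<sigma>*(b + a*c) - \<tau>*(a + b*c))"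
      by (simp add: inner_diff_right P0X P0Y algebra_simps)
    ultimately have "(1 - c^2) * (\<sigma>*(b + a*c) - \<tau>*(a + b*c)) = 0" by simp
    hence e1: "\<sigma>*(b + a*c) = \<tau>*(a + b*c)" using ZZpos by simp
    have "Ham X Y \<alpha> \<kappa> (p t) (u t) = 0" using t G_def by auto
    moreover have "cost X Y \<kappa> (u t) = \<bar>a\<bar> + \<kappa> * \<bar>b\<bar>" using cost_eq[OF X Y XY cc] ab by simp
    moreover have "(sin \<alpha>)^2 = 1 - c^2" using sin_squared_eq[of \<alpha>] c_def by simp
    moreover have "p t \<bullet> u t = (\<sigma>*a + \<tau>*b) * (1 - c^2)"
    proof -
      have "p t \<bullet> u t = a * (P0 \<bullet> X) + b * (P0 \<bullet> Y)" using ab ptP by (simp add: inner_add_right)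
      thus ?thesis unfolding P0X P0Y by (simp add: algebra_simps)
    qed
    ultimately have "(1 - c^2) * (\<sigma>*a + \<tau>*b - (\<bar>a\<bar> + \<kappa>*\<bar>b\<bar>)) = 0"
      unfolding Ham_def by (simp add: algebra_simps)
    hence "\<sigma>*a + \<tau>*b = \<bar>a\<bar> + \<kappa>*\<bar>b\<bar>" using ZZpos by simp
    with e1 ab show ?thesis unfolding c_def by blast
  qed
  show ?thesis
  proof
    show "\<forall>t\<in>{t1..t2}. z t = 0" using zall I_def by simp
    show "AE t in lebesgue. t \<in> {t1..t2} \<longrightarrow> (\<exists>a b. u t = a *\<^sub>R X + b *\<^sub>R Y \<and> \<bar>a\<bar> + \<bar>b\<bar> = 1 \<and>
        \<sigma>*a + \<tau>*b = \<bar>a\<bar> + \<kappa>*\<bar>b\<bar> \<and> \<sigma>*(b + a*cos \<alpha>) = \<tau>*(a + b*cos \<alpha>))"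
      using AEG by eventually_elim (use step5 I_def in auto)
  qed
qed




lemma caseA:
  fixes a b c k :: real
  assumes c: "0 \<le> c" "c < 1" and k: "0 \<le> k" "k \<le> 1" and ab: "\<bar>a\<bar> + \<bar>b\<bar> = 1"
    and h: "1*a + (-k)*b = \<bar>a\<bar> + k*\<bar>b\<bar>" and e: "1*(b + a*c) = (-k)*(a + b*c)"
  shows "a = (1 + k*c) / (1 + k*c + k + c) \<and> b = - ((k + c) / (1 + k*c + k + c))"
proof -
  have "k*(-b) \<le> k*\<bar>b\<bar>" using k by (intro mult_left_mono) auto
  hence a0: "a = \<bar>a\<bar>" using h by linarith
  have kc: "0 \<le> k*c" using k c by simp
  have e2: "b * (1 + k*c) = - a * (c + k)" using e by (simp add: algebra_simps)
  have "- a * (c + k) \<le> 0" using a0 c k by (simp add: mult_nonneg_nonneg)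
  hence "b * (1 + k*c) \<le> 0" using e2 by simp
  hence b0: "b \<le> 0" using kc by (simp add: mult_le_0_iff) 
  have ab1: "b = a - 1" using ab a0 b0 by linarith
  have D: "1 + k*c + k + c > 0" using kc k c by linarith
  have "a * (1 + k*c + k + c) = 1 + k*c" using e2 ab1 by (simp add: algebra_simps)
  hence a1: "a = (1 + k*c) / (1 + k*c + k + c)" using D by (simp add: field_simps)
  have "b = - ((k + c) / (1 + k*c + k + c))" using ab1 a1 D by (simp add: field_simps)
  with a1 show ?thesis by simp
qed

lemma caseB:
  fixes a b c k :: real
  assumes c: "0 \<le> c" "c < 1" and k: "0 < k" "k \<le> 1" and ab: "\<bar>a\<bar> + \<bar>b\<bar> = 1"
    and h: "1*a + k*b = \<bar>a\<bar> + k*\<bar>b\<bar>" and e: "1*(b + a*c) = k*(a + b*c)"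
  shows "c \<le> k \<and> a = (1 - k*c) / ((1 + k) * (1 - c)) \<and> b = (k - c) / ((1 + k) * (1 - c))"
proof -
  have "k*b \<le> k*\<bar>b\<bar>" using k by (intro mult_left_mono) auto
  hence a0: "a = \<bar>a\<bar>" using h by linarith
  hence "k*b = k*\<bar>b\<bar>" using h by linarith
  hence b0: "b = \<bar>b\<bar>" using k by simp
  have kc: "k*c < 1" using k c mult_right_mono[of k 1 c] by simp
  have e2: "a * (c - k) + b * (1 - k*c) = 0" using e by (simp add: algebra_simps)
  have ab1: "a + b = 1" using ab a0 b0 by linarith
  have ck: "c \<le> k"
  proof (rule ccontr)
    assume "\<not> c \<le> k"
    hence "a * (c - k) \<ge> 0" "b * (1 - k*c) \<ge> 0" using a0 b0 kc
      by (metis abs_ge_zero diff_ge_0_iff_ge mult_nonneg_nonneg nle_le, metis abs_ge_zero diff_ge_0_iff_ge less_eq_real_def mult_nonneg_nonneg)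
    hence "a * (c - k) = 0" "b * (1 - k*c) = 0" using e2 by linarith+
    hence "a = 0" "b = 0" using \<open>\<not> c \<le> k\<close> kc by auto
    with ab1 show False by simp
  qed
  have D: "(1 + k) * (1 - c) > 0" using k c by simp
  have "b = 1 - a" using ab1 by simp
  hence e3: "a * (c - k) + (1 - a) * (1 - k*c) = 0" using e2 by simp
  have "a * ((1 + k) * (1 - c)) = 1 - k*c - (a * (c - k) + (1 - a) * (1 - k*c))"
    by (simp add: algebra_simps)
  hence "a * ((1 + k) * (1 - c)) = 1 - k*c" using e3 by simp
  hence a1: "a = (1 - k*c) / ((1 + k) * (1 - c))" using D by (simp add: field_simps)
  have "b = (k - c) / ((1 + k) * (1 - c))" using ab1 a1 D by (simp add: field_simps)
  with a1 ck show ?thesis by simp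
qed

lemma caseC:
  fixes a b c k :: real
  assumes c: "0 \<le> c" "c < 1" and k: "0 \<le> k" "k \<le> 1" and ab: "\<bar>a\<bar> + \<bar>b\<bar> = 1"
    and h: "(-1)*a + k*b = \<bar>a\<bar> + k*\<bar>b\<bar>" and e: "(-1)*(b + a*c) = k*(a + b*c)"
  shows "a = - ((1 + k*c) / (1 + k*c + k + c)) \<and> b = (k + c) / (1 + k*c + k + c)"
proof -
  have "- a = (1 + k*c) / (1 + k*c + k + c) \<and> - b = - ((k + c) / (1 + k*c + k + c))"
  proof (rule caseA[OF c k])
    show "\<bar>- a\<bar> + \<bar>- b\<bar> = 1" using ab by simp
    show "1 * - a + - k * - b = \<bar>- a\<bar> + k * \<bar>- b\<bar>" using h by simp
    show "1 * (- b + - a * c) = - k * (- a + - b * c)" using e by argo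
  qed
  thus ?thesis by linarith
qed

lemma caseD:
  fixes a b c k :: real
  assumes c: "0 \<le> c" "c < 1" and k: "0 < k" "k \<le> 1" and ab: "\<bar>a\<bar> + \<bar>b\<bar> = 1"
    and h: "(-1)*a + (-k)*b = \<bar>a\<bar> + k*\<bar>b\<bar>" and e: "(-1)*(b + a*c) = (-k)*(a + b*c)"
  shows "c \<le> k \<and> a = - ((1 - k*c) / ((1 + k) * (1 - c))) \<and> b = - ((k - c) / ((1 + k) * (1 - c)))"
proof -
  have "c \<le> k \<and> - a = (1 - k*c) / ((1 + k) * (1 - c)) \<and> - b = (k - c) / ((1 + k) * (1 - c))"
  proof (rule caseB[OF c k])
    show "\<bar>- a\<bar> + \<bar>- b\<bar> = 1" using ab by simp
    show "1 * - a + k * - b = \<bar>- a\<bar> + k * \<bar>- b\<bar>" using h by simp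
    show "1 * (- b + - a * c) = k * (- a + - b * c)" using e by argo
  qed
  thus ?thesis by linarith
qed




theorem lemma3p6:
  fixes X Y :: "real^3" and \<alpha> \<kappa> t1 t2 :: real
    and u p :: "real \<Rightarrow> real^3"
  defines "c \<equiv> cos \<alpha>"
  defines "Z \<equiv> cross3 X Y"
  defines "S \<equiv> X - c *\<^sub>R Y"
  defines "Q \<equiv> Y - c *\<^sub>R X"
  defines "Wp \<equiv> (1 + \<kappa> * c) *\<^sub>R X - (\<kappa> + c) *\<^sub>R Y"
  defines "Wm \<equiv> (1 - \<kappa> * c) *\<^sub>R X + (\<kappa> - c) *\<^sub>R Y"
  assumes X: "norm X = 1" and Y: "norm Y = 1"
    and angle: "X \<bullet> Y = cos \<alpha>" and alpha: "0 < \<alpha>" "\<alpha> \<le> pi / 2"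
    and kappa: "0 \<le> \<kappa>" "\<kappa> \<le> 1"
    and t12: "t1 < t2"
    and u_meas: "u \<in> borel_measurable (lebesgue_on {t1..t2})"
    and u_C: "\<forall>t\<in>{t1..t2}. u t \<in> ctrlset X Y"
    and p_ac: "absolutely_continuous_on {t1..t2} p"
    and p_ode: "AE t in lebesgue. t \<in> {t1..t2} \<longrightarrow>
                  (p has_vector_derivative (cross3 (p t) (u t))) (at t within {t1..t2})"
    and pmp: "AE t in lebesgue. t \<in> {t1..t2} \<longrightarrow>
                  Ham X Y \<alpha> \<kappa> (p t) (u t) = Mfun X Y \<alpha> \<kappa> (p t) \<and> Mfun X Y \<alpha> \<kappa> (p t) = 0"
  shows
    "(\<forall>z. (\<forall>t\<in>{t1..t2}. p t = S - \<kappa> *\<^sub>R Q + z t *\<^sub>R Z) \<longrightarrow>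
        (\<forall>t\<in>{t1..t2}. z t = 0) \<and>
        (AE t in lebesgue. t \<in> {t1..t2} \<longrightarrow>
            u t = (1 / (1 + \<kappa> * c + \<kappa> + c)) *\<^sub>R Wp))
   \<and> (\<forall>z. 0 < \<kappa> \<and> (\<forall>t\<in>{t1..t2}. p t = S + \<kappa> *\<^sub>R Q + z t *\<^sub>R Z) \<longrightarrow>
        c \<le> \<kappa> \<and> (\<forall>t\<in>{t1..t2}. z t = 0) \<and>
        (AE t in lebesgue. t \<in> {t1..t2} \<longrightarrow>
            u t \<in> ctrlset X Y \<and> (\<exists>l>0. u t = l *\<^sub>R Wm)))
   \<and> (\<forall>z. (\<forall>t\<in>{t1..t2}. p t = - S + \<kappa> *\<^sub>R Q + z t *\<^sub>R Z) \<longrightarrow>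
        (\<forall>t\<in>{t1..t2}. z t = 0) \<and>
        (AE t in lebesgue. t \<in> {t1..t2} \<longrightarrow>
            u t \<in> ctrlset X Y \<and> (\<exists>l>0. u t = l *\<^sub>R (- Wp))))
   \<and> (\<forall>z. 0 < \<kappa> \<and> (\<forall>t\<in>{t1..t2}. p t = - S - \<kappa> *\<^sub>R Q + z t *\<^sub>R Z) \<longrightarrow>
        (\<forall>t\<in>{t1..t2}. z t = 0) \<and>
        (AE t in lebesgue. t \<in> {t1..t2} \<longrightarrow>
            u t \<in> ctrlset X Y \<and> (\<exists>l>0. u t = l *\<^sub>R (- Wm))))"
proof -
  have c0: "0 \<le> c" unfolding c_def using alpha by (intro cos_ge_zero) auto
  have c1: "c < 1" unfolding c_def using alpha cos_monotone_0_pi[of 0 \<alpha>] by auto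
  note core' = core[OF X Y angle alpha t12 u_C p_ac p_ode pmp]
  have kc: "0 \<le> \<kappa> * c" using kappa c0 by simp
  have D1: "1 + \<kappa> * c + \<kappa> + c > 0" using kc kappa c0 by linarith
  have D2: "(1 + \<kappa>) * (1 - c) > 0" using kappa c1 by simp
  have A: "(\<forall>t\<in>{t1..t2}. z t = 0) \<and>
        (AE t in lebesgue. t \<in> {t1..t2} \<longrightarrow> u t = (1 / (1 + \<kappa> * c + \<kappa> + c)) *\<^sub>R Wp)"
    if pz: "\<forall>t\<in>{t1..t2}. p t = S - \<kappa> *\<^sub>R Q + z t *\<^sub>R Z" for z
  proof -
    have "\<forall>t\<in>{t1..t2}. p t = 1 *\<^sub>R (X - cos \<alpha> *\<^sub>R Y) + (-\<kappa>) *\<^sub>R (Y - cos \<alpha> *\<^sub>R X) + z t *\<^sub>R cross3 X Y"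
      using pz by (simp add: S_def Q_def Z_def c_def)
    note r = core'[of 1 "-\<kappa>" z, OF disjI1[OF refl] this, simplified c_def[symmetric]]
    show ?thesis
    proof
      show "\<forall>t\<in>{t1..t2}. z t = 0" using r by simp
      show "AE t in lebesgue. t \<in> {t1..t2} \<longrightarrow> u t = (1 / (1 + \<kappa> * c + \<kappa> + c)) *\<^sub>R Wp"
        using conjunct2[OF r] proof eventually_elim
        case (elim t)
        show ?case
        proof
          assume "t \<in> {t1..t2}"
          then obtain a b where ab: "u t = a *\<^sub>R X + b *\<^sub>R Y" "\<bar>a\<bar> + \<bar>b\<bar> = 1"
            "1*a + (-\<kappa>)*b = \<bar>a\<bar> + \<kappa>*\<bar>b\<bar>" "1*(b + a*c) = (-\<kappa>)*(a + b*c)" using elim by blast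
          from caseA[OF c0 c1 kappa ab(2-4)] have
            "a = (1 + \<kappa>*c) / (1 + \<kappa>*c + \<kappa> + c)" "b = - ((\<kappa> + c) / (1 + \<kappa>*c + \<kappa> + c))" by auto
          thus "u t = (1 / (1 + \<kappa> * c + \<kappa> + c)) *\<^sub>R Wp"
            using ab(1) by (simp add: Wp_def scaleR_diff_right)
        qed
      qed
    qed
  qed
  have B: "c \<le> \<kappa> \<and> (\<forall>t\<in>{t1..t2}. z t = 0) \<and>
        (AE t in lebesgue. t \<in> {t1..t2} \<longrightarrow> u t \<in> ctrlset X Y \<and> (\<exists>l>0. u t = l *\<^sub>R Wm))"
    if k0: "0 < \<kappa>" and pz: "\<forall>t\<in>{t1..t2}. p t = S + \<kappa> *\<^sub>R Q + z t *\<^sub>R Z" for z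
  proof -
    have "\<forall>t\<in>{t1..t2}. p t = 1 *\<^sub>R (X - cos \<alpha> *\<^sub>R Y) + \<kappa> *\<^sub>R (Y - cos \<alpha> *\<^sub>R X) + z t *\<^sub>R cross3 X Y"
      using pz by (simp add: S_def Q_def Z_def c_def)
    note r = core'[of 1 "\<kappa>" z, OF disjI1[OF refl] this, simplified c_def[symmetric]]
    have kk: "0 < \<kappa>" "\<kappa> \<le> 1" using k0 kappa by auto
    obtain t where "t \<in> {t1<..<t2}" "t \<in> {t1..t2} \<longrightarrow> (\<exists>a b. u t = a *\<^sub>R X + b *\<^sub>R Y \<and> \<bar>a\<bar> + \<bar>b\<bar> = 1 \<and>
        1*a + \<kappa>*b = \<bar>a\<bar> + \<kappa>*\<bar>b\<bar> \<and> 1*(b + a*c) = \<kappa>*(a + b*c))"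
      using AE_dense[OF conjunct2[OF r] t12] by blast
    then obtain a b where "\<bar>a\<bar> + \<bar>b\<bar> = 1" "1*a + \<kappa>*b = \<bar>a\<bar> + \<kappa>*\<bar>b\<bar>" "1*(b + a*c) = \<kappa>*(a + b*c)"
      by auto
    from caseB[OF c0 c1 kk this] have ck: "c \<le> \<kappa>" by simp
    have "AE t in lebesgue. t \<in> {t1..t2} \<longrightarrow> u t \<in> ctrlset X Y \<and> (\<exists>l>0. u t = l *\<^sub>R Wm)"
      using conjunct2[OF r] proof eventually_elim
      case (elim t)
      show ?case
      proof
        assume tI: "t \<in> {t1..t2}"
        then obtain a b where ab: "u t = a *\<^sub>R X + b *\<^sub>R Y" "\<bar>a\<bar> + \<bar>b\<bar> = 1"
          "1*a + \<kappa>*b = \<bar>a\<bar> + \<kappa>*\<bar>b\<bar>" "1*(b + a*c) = \<kappa>*(a + b*c)" using elim by blast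
        from caseB[OF c0 c1 kk ab(2-4)] have
          "a = (1 - \<kappa>*c) / ((1 + \<kappa>) * (1 - c))" "b = (\<kappa> - c) / ((1 + \<kappa>) * (1 - c))" by auto
        hence "u t = (1 / ((1 + \<kappa>) * (1 - c))) *\<^sub>R Wm"
          using ab(1) by (simp add: Wm_def scaleR_add_right)
        moreover have "1 / ((1 + \<kappa>) * (1 - c)) > 0" using D2 by simp
        ultimately show "u t \<in> ctrlset X Y \<and> (\<exists>l>0. u t = l *\<^sub>R Wm)" using u_C tI by blast
      qed
    qed
    with r ck show ?thesis by simp
  qed
  have C: "(\<forall>t\<in>{t1..t2}. z t = 0) \<and>
        (AE t in lebesgue. t \<in> {t1..t2} \<longrightarrow> u t \<in> ctrlset X Y \<and> (\<exists>l>0. u t = l *\<^sub>R (- Wp)))"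
    if pz: "\<forall>t\<in>{t1..t2}. p t = - S + \<kappa> *\<^sub>R Q + z t *\<^sub>R Z" for z
  proof -
    have "\<forall>t\<in>{t1..t2}. p t = (-1) *\<^sub>R (X - cos \<alpha> *\<^sub>R Y) + \<kappa> *\<^sub>R (Y - cos \<alpha> *\<^sub>R X) + z t *\<^sub>R cross3 X Y"
      using pz by (simp add: S_def Q_def Z_def c_def)
    note r = core'[of "-1" "\<kappa>" z, OF disjI2[OF refl] this, simplified c_def[symmetric]]
    have "AE t in lebesgue. t \<in> {t1..t2} \<longrightarrow> u t \<in> ctrlset X Y \<and> (\<exists>l>0. u t = l *\<^sub>R (- Wp))"
      using conjunct2[OF r] proof eventually_elim
      case (elim t)
      show ?case
      proof
        assume tI: "t \<in> {t1..t2}"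
        then obtain a b where ab: "u t = a *\<^sub>R X + b *\<^sub>R Y" "\<bar>a\<bar> + \<bar>b\<bar> = 1"
          "(-1)*a + \<kappa>*b = \<bar>a\<bar> + \<kappa>*\<bar>b\<bar>" "(-1)*(b + a*c) = \<kappa>*(a + b*c)" using elim by blast
        from caseC[OF c0 c1 kappa ab(2-4)] have
          "a = - ((1 + \<kappa>*c) / (1 + \<kappa>*c + \<kappa> + c))" "b = (\<kappa> + c) / (1 + \<kappa>*c + \<kappa> + c)" by auto
        hence "u t = (1 / (1 + \<kappa>*c + \<kappa> + c)) *\<^sub>R (- Wp)"
          using ab(1) by (simp add: Wp_def scaleR_diff_right)
        moreover have "1 / (1 + \<kappa>*c + \<kappa> + c) > 0" using D1 by simp
        ultimately show "u t \<in> ctrlset X Y \<and> (\<exists>l>0. u t = l *\<^sub>R (- Wp))" using u_C tI by blast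
      qed
    qed
    with r show ?thesis by simp
  qed
  have D: "(\<forall>t\<in>{t1..t2}. z t = 0) \<and>
        (AE t in lebesgue. t \<in> {t1..t2} \<longrightarrow> u t \<in> ctrlset X Y \<and> (\<exists>l>0. u t = l *\<^sub>R (- Wm)))"
    if k0: "0 < \<kappa>" and pz: "\<forall>t\<in>{t1..t2}. p t = - S - \<kappa> *\<^sub>R Q + z t *\<^sub>R Z" for z
  proof -
    have "\<forall>t\<in>{t1..t2}. p t = (-1) *\<^sub>R (X - cos \<alpha> *\<^sub>R Y) + (-\<kappa>) *\<^sub>R (Y - cos \<alpha> *\<^sub>R X) + z t *\<^sub>R cross3 X Y"
      using pz by (simp add: S_def Q_def Z_def c_def)
    note r = core'[of "-1" "-\<kappa>" z, OF disjI2[OF refl] this, simplified c_def[symmetric]]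
    have kk: "0 < \<kappa>" "\<kappa> \<le> 1" using k0 kappa by auto
    have "AE t in lebesgue. t \<in> {t1..t2} \<longrightarrow> u t \<in> ctrlset X Y \<and> (\<exists>l>0. u t = l *\<^sub>R (- Wm))"
      using conjunct2[OF r] proof eventually_elim
      case (elim t)
      show ?case
      proof
        assume tI: "t \<in> {t1..t2}"
        then obtain a b where ab: "u t = a *\<^sub>R X + b *\<^sub>R Y" "\<bar>a\<bar> + \<bar>b\<bar> = 1"
          "(-1)*a + (-\<kappa>)*b = \<bar>a\<bar> + \<kappa>*\<bar>b\<bar>" "(-1)*(b + a*c) = (-\<kappa>)*(a + b*c)" using elim by blast
        from caseD[OF c0 c1 kk ab(2-4)] have
          "a = - ((1 - \<kappa>*c) / ((1 + \<kappa>) * (1 - c)))" "b = - ((\<kappa> - c) / ((1 + \<kappa>) * (1 - c)))" by auto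
        hence "u t = (1 / ((1 + \<kappa>) * (1 - c))) *\<^sub>R (- Wm)"
          using ab(1) by (simp add: Wm_def scaleR_add_right scaleR_diff_right)
        moreover have "1 / ((1 + \<kappa>) * (1 - c)) > 0" using D2 by simp
        ultimately show "u t \<in> ctrlset X Y \<and> (\<exists>l>0. u t = l *\<^sub>R (- Wm))" using u_C tI by blast
      qed
    qed
    with r show ?thesis by simp
  qed
  show ?thesis using A B C D by blast
qed


end
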